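(* Let $\mathcal{S}$ be the ZCA-cor or the Cholesky whitening process, and let $\mathcal{D}$ be a Zolotarev ideal divergence. Then $\mathcal{D}_\mathcal{S}$ restricted to $\mathcal{P}_{\mathbf I}(\mathbb{R}^n)$ satisfies $$\mathcal{D}_\mathcal{S}(X+Z,Y+W)\le\mathcal{D}_\mathcal{S}(X,Y)+\mathcal{D}_\mathcal{S}(Z,W)$$ for all random vectors $X,Y,Z,W$ with identity covariance such that $X$ and $Z$ are independent and $Y$ and $W$ are independent.
   Context: $\mathcal{P}_{\mathbf I}(\mathbb{R}^n)$ is the set of probability measures on $\mathbb{R}^n$ with identity covariance; random vectors are identified with their laws. A linear whitening process maps $X$ (with invertible covariance $\Sigma$) to $W_XX$. Cholesky whitening: $W_X=L^T$, where $L$ is the unique lower triangular matrix with positive diagonal such that $LL^T=\Sigma^{-1}$. ZCA-cor whitening: $W_X=P^{-1/2}V^{-1/2}$, $P$ the correlation matrix of $X$, $V=\mathrm{diag}(\mathrm{Var}(X_1),\dots,\mathrm{Var}(X_n))$, with the square root chosen so that $W_X=\mathbf I$ whenever $X$ has identity covariance (in particular the square root of $\mathbf I$ is $\mathbf I$). $\mathcal{D}_\mathcal{S}(X,Y)=\mathcal{D}(\mathcal{S}(X),\mathcal{S}(Y))$. A divergence $\mathcal{D}$ is Zolotarev ideal if (i) $\mathcal{D}(X+Z,Y+W)\le\mathcal{D}(X,Y)+\mathcal{D}(Z,W)$ whenever $Z$ is independent of $X$ and $W$ is independent of $Y$, and (ii) $\mathcal{D}(cX,cY)=|c|\mathcal{D}(X,Y)$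 for all $X,Y$ and $c\in\mathbb{R}$. *)

theory Defs
  imports "HOL-Probability.Probability"
begin

text \<open>Laws of random vectors in R^n (index type 'n): Borel probability measures.\<close>
definition is_law :: "(real^'n) measure \<Rightarrow> bool" where
  "is_law \<mu> \<longleftrightarrow> prob_space \<mu> \<and> sets \<mu> = sets borel"

text \<open>Law of X + Z for independent X ~ mu, Z ~ nu (convolution).\<close>
definition law_sum :: "(real^'n) measure \<Rightarrow> (real^'n) measure \<Rightarrow> (real^'n) measure" where
  "law_sum \<mu> \<nu> = distr (\<mu> \<Otimes>\<^sub>M \<nu>) borel (\<lambda>(x, y). x + y)"

definition law_lin :: "real^'n^'n \<Rightarrow> (real^'n) measure \<Rightarrow> (real^'n) measure" where
  "law_lin A \<mu> = distr \<mu> borel (\<lambda>x. A *v x)"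

definition law_scale :: "real \<Rightarrow> (real^'n) measure \<Rightarrow> (real^'n) measure" where
  "law_scale c \<mu> = distr \<mu> borel (\<lambda>x. c *\<^sub>R x)"

definition mean_vec :: "(real^'n) measure \<Rightarrow> real^'n" where
  "mean_vec \<mu> = (\<chi> i. \<integral>x. x $ i \<partial>\<mu>)"

definition cov_mat :: "(real^'n) measure \<Rightarrow> real^'n^'n" where
  "cov_mat \<mu> = (\<chi> i j. \<integral>x. (x $ i - mean_vec \<mu> $ i) * (x $ j - mean_vec \<mu> $ j) \<partial>\<mu>)"

definition finite_second_moments :: "(real^'n) measure \<Rightarrow> bool" where
  "finite_second_moments \<mu> \<longleftrightarrow> (\<forall>i. integrable \<mu> (\<lambda>x. (x $ i)\<^sup>2))"

definition identity_cov :: "(real^'n) measure \<Rightarrow> bool" where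
  "identity_cov \<mu> \<longleftrightarrow> is_law \<mu> \<and> finite_second_moments \<mu> \<and> cov_mat \<mu> = mat 1"

definition pos_def_mat :: "real^'n^'n \<Rightarrow> bool" where
  "pos_def_mat B \<longleftrightarrow> (\<forall>x. x \<noteq> 0 \<longrightarrow> x \<bullet> (B *v x) > 0)"

definition mat_sqrt :: "real^'n^'n \<Rightarrow> real^'n^'n" where
  "mat_sqrt A = (THE B. transpose B = B \<and> pos_def_mat B \<and> B ** B = A)"

definition lower_triangular :: "real^('n::{finite,linorder})^('n::{finite,linorder}) \<Rightarrow> bool" where
  "lower_triangular L \<longleftrightarrow> (\<forall>i j. i < j \<longrightarrow> L $ i $ j = 0)"

definition cholesky_W :: "real^('n::{finite,linorder})^('n::{finite,linorder}) \<Rightarrow> real^('n::{finite,linorder})^('n::{finite,linorder})" where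
  "cholesky_W \<Sigma> = transpose (THE L. lower_triangular L \<and> (\<forall>i. L $ i $ i > 0)
       \<and> L ** transpose L = matrix_inv \<Sigma>)"

definition corr_mat :: "real^'n^'n \<Rightarrow> real^'n^'n" where
  "corr_mat \<Sigma> = (\<chi> i j. \<Sigma> $ i $ j / sqrt (\<Sigma> $ i $ i * \<Sigma> $ j $ j))"

definition var_inv_sqrt :: "real^'n^'n \<Rightarrow> real^'n^'n" where
  "var_inv_sqrt \<Sigma> = (\<chi> i j. if i = j then 1 / sqrt (\<Sigma> $ i $ i) else 0)"

definition zca_cor_W :: "real^'n^'n \<Rightarrow> real^'n^'n" where
  "zca_cor_W \<Sigma> = matrix_inv (mat_sqrt (corr_mat \<Sigma>)) ** var_inv_sqrt \<Sigma>"

definition whiten :: "(real^'n^'n \<Rightarrow> real^'n^'n) \<Rightarrow> (real^'n) measure \<Rightarrow> (real^'n) measure" where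
  "whiten Wf \<mu> = law_lin (Wf (cov_mat \<mu>)) \<mu>"

definition whitened_div ::
  "((real^'n) measure \<Rightarrow> (real^'n) measure \<Rightarrow> ennreal) \<Rightarrow> (real^'n^'n \<Rightarrow> real^'n^'n)
     \<Rightarrow> (real^'n) measure \<Rightarrow> (real^'n) measure \<Rightarrow> ennreal" where
  "whitened_div D Wf \<mu> \<nu> = D (whiten Wf \<mu>) (whiten Wf \<nu>)"

definition zolotarev_ideal :: "((real^'n) measure \<Rightarrow> (real^'n) measure \<Rightarrow> ennreal) \<Rightarrow> bool" where
  "zolotarev_ideal D \<longleftrightarrow>
     (\<forall>\<mu> \<nu> \<rho> \<tau>. is_law \<mu> \<longrightarrow> is_law \<nu> \<longrightarrow> is_law \<rho> \<longrightarrow> is_law \<tau> \<longrightarrow>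
        D (law_sum \<mu> \<rho>) (law_sum \<nu> \<tau>) \<le> D \<mu> \<nu> + D \<rho> \<tau>) \<and>
     (\<forall>\<mu> \<nu> c. is_law \<mu> \<longrightarrow> is_law \<nu> \<longrightarrow>
        D (law_scale c \<mu>) (law_scale c \<nu>) = ennreal \<bar>c\<bar> * D \<mu> \<nu>)"

end

theory Submission imports Defs begin

lemma mat_entry: "(mat c :: 'a::zero^'n^'n) $ i $ j = (if i = j then c else 0)"
  by (simp add: mat_def)

lemma mat_left: "(mat a :: real^'n^'n) ** B = (\<chi> i j. a * B$i$j)"
  unfolding vec_eq_iff matrix_matrix_mult_def mat_def
  by (simp add: if_distrib if_distribR  cong: if_cong)

lemma mat_mult_mat: "(mat a :: real^'n^'n) ** mat b = mat (a*b)"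
  by (simp add: mat_left vec_eq_iff mat_entry)

lemma mat_vec: "(mat a :: real^'n^'n) *v x = a *\<^sub>R x"
  unfolding vec_eq_iff matrix_vector_mult_def mat_def
  by (simp add: if_distrib if_distribR  cong: if_cong)

lemma matrix_inv_mat:
  assumes "a \<noteq> 0" shows "matrix_inv (mat a :: real^'n^'n) = mat (1/a)"
  unfolding matrix_inv_def
proof (rule some_equality)
  show "mat a ** mat (1 / a) = mat 1 \<and> mat (1 / a) ** mat a = (mat 1 :: real^'n^'n)"
    using assms by (simp add: mat_mult_mat)
next
  fix A' :: "real^'n^'n" assume "mat a ** A' = mat 1 \<and> A' ** mat a = mat 1"
  then have "mat a ** A' = mat 1" by blast
  then have h: "\<And>i j. a * A'$i$j = (mat 1 :: real^'n^'n)$i$j"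
    by (simp add: mat_left vec_eq_iff)
  show "A' = mat (1/a)"
  proof (intro iffD2[OF vec_eq_iff] allI)
    fix i j show "A' $ i $ j = mat (1/a) $ i $ j"
      using h[of i j] assms unfolding mat_entry by (cases "i = j") (auto simp: field_simps)
  qed
qed

lemma mat_sqrt_one: "mat_sqrt (mat 1 :: real^'n^'n) = mat 1"
  unfolding mat_sqrt_def
proof (rule the_equality)
  show "transpose (mat 1) = (mat 1 :: real^'n^'n) \<and> pos_def_mat (mat 1 :: real^'n^'n) \<and> mat 1 ** mat 1 = (mat 1 :: real^'n^'n)"
    by (simp add: pos_def_mat_def)
next
  fix B :: "real^'n^'n" assume B: "transpose B = B \<and> pos_def_mat B \<and> B ** B = mat 1"
  have "B *v x = x" for x
  proof -
    define v where "v = B *v x - x"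
    have "B *v v = - v"
      using B by (simp add: v_def matrix_vector_mult_diff_distrib matrix_vector_mul_assoc)
    then have "v \<bullet> (B *v v) \<le> 0" by simp
    then have "v = 0" using B unfolding pos_def_mat_def by (meson not_le)
    then show ?thesis by (simp add: v_def)
  qed
  then show "B = mat 1" by (simp add: matrix_eq)
qed

lemma zca_mat: assumes "c > 0" shows "zca_cor_W (mat c :: real^('n::{finite,linorder})^('n::{finite,linorder})) = mat (1 / sqrt c)"
proof -
  have "corr_mat (mat c :: real^('n::{finite,linorder})^('n::{finite,linorder})) = mat 1"
    using assms by (simp add: corr_mat_def vec_eq_iff mat_entry real_sqrt_mult[symmetric])
  moreover have "var_inv_sqrt (mat c :: real^('n::{finite,linorder})^('n::{finite,linorder})) = mat (1 / sqrt c)"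
    by (simp add: var_inv_sqrt_def vec_eq_iff mat_entry)
  ultimately show ?thesis
    by (simp add: zca_cor_W_def mat_sqrt_one matrix_inv_mat mat_mult_mat)
qed

lemma card_less_mono:
  fixes m k :: "'a::{finite,linorder}"
  assumes "m < k" shows "card {x. x < m} < card {x. x < k}"
  by (rule psubset_card_mono) (use assms in auto)

lemma chol_unique:
  fixes L :: "real^('n::{finite,linorder})^('n::{finite,linorder})"
  assumes lt: "lower_triangular L" and pos: "\<forall>i. L $ i $ i > 0" and eq: "L ** transpose L = mat d"
  shows "L = mat (sqrt d)"
proof -
  have E: "(\<Sum>m\<in>UNIV. L$i$m * L$j$m) = (if i = j then d else 0)" for i j
    using arg_cong[OF eq, of "\<lambda>A. A$i$j"]
    by (simp add: matrix_matrix_mult_def transpose_def mat_entry)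
  have lt': "L$i$j = 0" if "i < j" for i j using lt that unfolding lower_triangular_def by blast
  have P: "\<forall>j. j \<noteq> k \<longrightarrow> L$j$k = 0" for k
  proof (induction k rule: measure_induct_rule[where f="\<lambda>k. card {x. x < k}"])
    case (less k)
    have IH: "L$k$m = 0" if "m < k" for m
      using less[OF card_less_mono[OF that]] that by auto
    have row: "L$k$m = 0" if "m \<noteq> k" for m
      using that IH lt'[of k m] by (cases "m < k") (auto simp: not_less_iff_gr_or_eq)
    show ?case
    proof (intro allI impI)
      fix j assume "j \<noteq> k"
      show "L$j$k = 0"
      proof (cases "j < k")
        case True then show ?thesis using lt' by blast
      next
        case False
        have "(\<Sum>m\<in>UNIV. L$j$m * L$k$m) = (\<Sum>m\<in>UNIV. if m = k then L$j$k * L$k$k else 0)"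
          by (rule sum.cong) (auto simp: row)
        also have "\<dots> = L$j$k * L$k$k" by simp
        finally have "L$j$k * L$k$k = 0" using E[of j k] \<open>j \<noteq> k\<close> by simp
        then show ?thesis using pos[rule_format, of k] by simp
      qed
    qed
  qed
  have diag: "L$k$k = sqrt d" for k
  proof -
    have "(\<Sum>m\<in>UNIV. L$k$m * L$k$m) = (\<Sum>m\<in>UNIV. if m = k then L$k$k * L$k$k else 0)"
      by (rule sum.cong) (use P in auto)
    then have "L$k$k * L$k$k = d" using E[of k k] by simp
    then have "sqrt d = sqrt (L$k$k * L$k$k)" by simp
    also have "\<dots> = L$k$k" using pos[rule_format, of k] by (simp add: real_sqrt_mult_self)
    finally show ?thesis by simp
  qed
  show ?thesis
    unfolding vec_eq_iff mat_entry using P diag by auto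
qed

lemma chol_mat: assumes "c > 0" shows "cholesky_W (mat c :: real^('n::{finite,linorder})^('n::{finite,linorder})) = mat (1 / sqrt c)"
proof -
  have "(THE L. lower_triangular L \<and> (\<forall>i. L $ i $ i > 0) \<and> L ** transpose L = matrix_inv (mat c :: real^('n::{finite,linorder})^('n::{finite,linorder})))
        = mat (sqrt (1/c))"
  proof (rule the_equality)
    show "lower_triangular (mat (sqrt (1/c)) :: real^('n::{finite,linorder})^('n::{finite,linorder})) \<and> (\<forall>i. (mat (sqrt (1/c)) :: real^('n::{finite,linorder})^('n::{finite,linorder})) $ i $ i > 0) \<and>
      mat (sqrt (1/c)) ** transpose (mat (sqrt (1/c))) = matrix_inv (mat c :: real^('n::{finite,linorder})^('n::{finite,linorder}))"
      using assms by (simp add: lower_triangular_def mat_entry mat_mult_mat matrix_inv_mat)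
  next
    fix L :: "real^('n::{finite,linorder})^('n::{finite,linorder})" assume "lower_triangular L \<and> (\<forall>i. L $ i $ i > 0) \<and> L ** transpose L = matrix_inv (mat c)"
    then show "L = mat (sqrt (1/c))" using chol_unique[of L "1/c"] assms by (simp add: matrix_inv_mat)
  qed
  then show ?thesis by (simp add: cholesky_W_def real_sqrt_divide)
qed

lemma W_mat: assumes "Wf = zca_cor_W \<or> Wf = cholesky_W" "c > 0"
  shows "Wf (mat c :: real^('n::{finite,linorder})^('n::{finite,linorder})) = mat (1 / sqrt c)"
  using assms zca_mat chol_mat by metis

lemma prod_int:
  fixes f :: "'a \<Rightarrow> real" and g :: "'b \<Rightarrow> real"
  assumes M: "prob_space M" and N: "prob_space N"
    and f: "integrable M f" and g: "integrable N g"
  shows "integrable (M \<Otimes>\<^sub>M N) (\<lambda>z. f (fst z) * g (snd z))"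
    and "(\<integral>z. f (fst z) * g (snd z) \<partial>(M \<Otimes>\<^sub>M N)) = (\<integral>x. f x \<partial>M) * (\<integral>y. g y \<partial>N)"
proof -
  interpret M: prob_space M by fact
  interpret N: prob_space N by fact
  interpret P: pair_sigma_finite M N ..
  have fm[measurable]: "f \<in> borel_measurable M" using f by auto
  have gm[measurable]: "g \<in> borel_measurable N" using g by auto
  have "(\<integral>\<^sup>+ z. ennreal (norm (f (fst z) * g (snd z))) \<partial>(M \<Otimes>\<^sub>M N))
      = (\<integral>\<^sup>+ x. \<integral>\<^sup>+ y. ennreal (norm (f x)) * ennreal (norm (g y)) \<partial>N \<partial>M)"
    by (subst N.nn_integral_fst[symmetric]) (auto simp: abs_mult ennreal_mult)
  also have "\<dots> = (\<integral>\<^sup>+ x. ennreal (norm (f x)) * (\<integral>\<^sup>+ y. ennreal (norm (g y)) \<partial>N) \<partial>M)"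
    by (simp add: nn_integral_cmult)
  also have "\<dots> = (\<integral>\<^sup>+ x. ennreal (norm (f x)) \<partial>M) * (\<integral>\<^sup>+ y. ennreal (norm (g y)) \<partial>N)"
    by (simp add: nn_integral_multc)
  also have "\<dots> < \<infinity>"
    using f g by (simp add: integrable_iff_bounded ennreal_mult_less_top)
  finally show int: "integrable (M \<Otimes>\<^sub>M N) (\<lambda>z. f (fst z) * g (snd z))"
    by (simp add: integrable_iff_bounded)
  have "(\<integral>z. f (fst z) * g (snd z) \<partial>(M \<Otimes>\<^sub>M N)) = (\<integral>x. \<integral>y. f x * g y \<partial>N \<partial>M)"
    using P.integral_fst'[of "\<lambda>z. f (fst z) * g (snd z)"] int by simp
  also have "\<dots> = (\<integral>x. f x * (\<integral>y. g y \<partial>N) \<partial>M)" by simp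
  also have "\<dots> = (\<integral>x. f x \<partial>M) * (\<integral>y. g y \<partial>N)" by simp
  finally show "(\<integral>z. f (fst z) * g (snd z) \<partial>(M \<Otimes>\<^sub>M N)) = (\<integral>x. f x \<partial>M) * (\<integral>y. g y \<partial>N)" .
qed

lemma abs_prod_le: "\<bar>a * b\<bar> \<le> a\<^sup>2 + (b::real)\<^sup>2"
proof -
  have "0 \<le> (\<bar>a\<bar> - \<bar>b\<bar>)\<^sup>2" by simp
  also have "\<dots> = a\<^sup>2 + b\<^sup>2 - 2 * \<bar>a * b\<bar>"
    by (simp add: power2_eq_square abs_mult algebra_simps)
  finally show ?thesis by simp
qed

lemma mom:
  fixes \<mu> :: "(real^'n) measure"
  assumes "identity_cov \<mu>"
  shows "prob_space \<mu>" "sets \<mu> = sets borel"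
    and "integrable \<mu> (\<lambda>x. x$i - mean_vec \<mu> $ i)"
    and "(\<integral>x. x$i - mean_vec \<mu> $ i \<partial>\<mu>) = 0"
    and "integrable \<mu> (\<lambda>x. (x$i - mean_vec \<mu> $ i) * (x$j - mean_vec \<mu> $ j))"
    and "(\<integral>x. (x$i - mean_vec \<mu> $ i) * (x$j - mean_vec \<mu> $ j) \<partial>\<mu>) = (if i = j then 1 else 0)"
proof -
  show P: "prob_space \<mu>" and S: "sets \<mu> = sets borel"
    using assms by (auto simp: identity_cov_def is_law_def)
  interpret prob_space \<mu> by fact
  have ms: "measurable \<mu> borel = measurable borel borel" by (rule measurable_cong_sets[OF S refl])
  have meas: "(\<lambda>x. x$k) \<in> borel_measurable \<mu>" for k unfolding ms by measurable
  have sq: "integrable \<mu> (\<lambda>x. (x$k)\<^sup>2)" for k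
    using assms by (auto simp: identity_cov_def finite_second_moments_def)
  have int1: "integrable \<mu> (\<lambda>x. x$k)" for k
    by (rule square_integrable_imp_integrable[OF meas sq])
  have int2: "integrable \<mu> (\<lambda>x. x$k * x$l)" for k l
  proof (rule Bochner_Integration.integrable_bound[where f="\<lambda>x::real^'n. (x$k)\<^sup>2 + (x$l)\<^sup>2"])
    show "integrable \<mu> (\<lambda>x. (x$k)\<^sup>2 + (x$l)\<^sup>2)" using sq by auto
    show "(\<lambda>x. x$k * x$l) \<in> borel_measurable \<mu>" using meas by measurable
    show "AE x in \<mu>. norm (x$k * x$l) \<le> norm ((x$k)\<^sup>2 + (x$l)\<^sup>2)"
    proof (intro AE_I2)
      fix x :: "real^'n"
      have "\<bar>x$k * x$l\<bar> \<le> (x$k)\<^sup>2 + (x$l)\<^sup>2"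
        by (rule abs_prod_le)
      then show "norm (x$k * x$l) \<le> norm ((x$k)\<^sup>2 + (x$l)\<^sup>2)" by simp
    qed
  qed
  show "integrable \<mu> (\<lambda>x. x$i - mean_vec \<mu> $ i)" using int1 by auto
  show "(\<integral>x. x$i - mean_vec \<mu> $ i \<partial>\<mu>) = 0"
    using int1 by (simp add: mean_vec_def prob_space)
  have e: "(\<lambda>x. (x$i - mean_vec \<mu> $ i) * (x$j - mean_vec \<mu> $ j)) =
     (\<lambda>x. x$i * x$j - mean_vec \<mu> $ j * x$i - mean_vec \<mu> $ i * x$j + mean_vec \<mu> $ i * mean_vec \<mu> $ j)"
    by (auto simp: algebra_simps)
  show "integrable \<mu> (\<lambda>x. (x$i - mean_vec \<mu> $ i) * (x$j - mean_vec \<mu> $ j))"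
    unfolding e using int1 int2 by auto
  have "cov_mat \<mu> $ i $ j = (mat 1 :: real^'n^'n) $ i $ j" using assms by (simp add: identity_cov_def)
  then show "(\<integral>x. (x$i - mean_vec \<mu> $ i) * (x$j - mean_vec \<mu> $ j) \<partial>\<mu>) = (if i = j then 1 else 0)"
    by (simp add: cov_mat_def mat_def)
qed

lemma law_sum_cov:
  fixes \<mu> \<nu> :: "(real^'n) measure"
  assumes A: "identity_cov \<mu>" and B: "identity_cov \<nu>"
  shows "is_law (law_sum \<mu> \<nu>)" and "cov_mat (law_sum \<mu> \<nu>) = mat 2"
proof -
  note mA = mom[OF A] and mB = mom[OF B]
  interpret M: prob_space \<mu> by (rule mA(1))
  interpret N: prob_space \<nu> by (rule mB(1))
  interpret P: pair_prob_space \<mu> \<nu> ..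
  let ?P = "\<mu> \<Otimes>\<^sub>M \<nu>"
  have ms: "measurable ?P borel = measurable (borel \<Otimes>\<^sub>M borel) borel"
    by (rule measurable_cong_sets[OF sets_pair_measure_cong[OF mA(2) mB(2)] refl])
  have smeas: "(\<lambda>(x, y). x + y) \<in> measurable ?P (borel :: (real^'n) measure)"
    unfolding ms by measurable
  have LS: "law_sum \<mu> \<nu> = distr ?P borel (\<lambda>(x, y). x + y)" by (simp add: law_sum_def)
  show "is_law (law_sum \<mu> \<nu>)"
    unfolding is_law_def LS using P.prob_space_distr[OF smeas] by simp
  have I: "integral\<^sup>L (law_sum \<mu> \<nu>) g = (\<integral>z. g (fst z + snd z) \<partial>?P)"
    if [measurable]: "g \<in> borel_measurable borel" for g :: "real^'n \<Rightarrow> real"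
    unfolding LS by (subst integral_distr[OF smeas]) (auto simp: case_prod_beta)
  have one: "integrable M (\<lambda>_. 1::real)" if "prob_space M" for M :: "'x measure"
    using that by (simp add: prob_space.finite_measure finite_measure.integrable_const)
  define mu where "mu = mean_vec \<mu>"
  define nu where "nu = mean_vec \<nu>"
  have mean: "mean_vec (law_sum \<mu> \<nu>) $ i = mu $ i + nu $ i" for i
  proof -
    have "mean_vec (law_sum \<mu> \<nu>) $ i = (\<integral>z. (fst z + snd z) $ i \<partial>?P)"
      by (simp add: mean_vec_def I)
    also have "\<dots> = (\<integral>z. ((fst z $ i - mu $ i) * 1 + 1 * (snd z $ i - nu $ i)) + (mu $ i + nu $ i) \<partial>?P)"
      by simp
    also have "\<dots> = (\<integral>z. ((fst z $ i - mu $ i) * 1 + 1 * (snd z $ i - nu $ i)) \<partial>?P) + (mu $ i + nu $ i)"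
      using prod_int[OF mA(1) mB(1) mA(3)[of i] one[OF mB(1)]]
            prod_int[OF mA(1) mB(1) one[OF mA(1)] mB(3)[of i]]
      unfolding mu_def nu_def
      by (subst Bochner_Integration.integral_add) (auto simp: P.prob_space)
    also have "(\<integral>z. ((fst z $ i - mu $ i) * 1 + 1 * (snd z $ i - nu $ i)) \<partial>?P) = 0"
      using prod_int[OF mA(1) mB(1) mA(3)[of i] one[OF mB(1)]]
            prod_int[OF mA(1) mB(1) one[OF mA(1)] mB(3)[of i]]
      unfolding mu_def nu_def
      by (subst Bochner_Integration.integral_add) (auto simp only: mA(4) mB(4) M.prob_space N.prob_space)
    finally show ?thesis by simp
  qed
  show "cov_mat (law_sum \<mu> \<nu>) = mat 2"
  proof (intro iffD2[OF vec_eq_iff] allI)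
    fix i j
    let ?a = "\<lambda>k x. x $ k - mu $ k" and ?b = "\<lambda>k y. y $ k - nu $ k"
    have "cov_mat (law_sum \<mu> \<nu>) $ i $ j = (\<integral>z. ((fst z + snd z) $ i - (mu $ i + nu $ i)) * ((fst z + snd z) $ j - (mu $ j + nu $ j)) \<partial>?P)"
      by (simp add: cov_mat_def mean I)
    also have "\<dots> = (\<integral>z. (?a i (fst z) * ?a j (fst z)) * 1 + ?a i (fst z) * ?b j (snd z)
                   + ?a j (fst z) * ?b i (snd z) + 1 * (?b i (snd z) * ?b j (snd z)) \<partial>?P)"
      by (rule Bochner_Integration.integral_cong) (auto simp: algebra_simps)
    also have "\<dots> = (if i = j then 1 else 0) + 0 * 0 + 0 * 0 + (if i = j then 1 else 0)"
      using prod_int[OF mA(1) mB(1) mA(5)[of i j] one[OF mB(1)]]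
            prod_int[OF mA(1) mB(1) mA(3)[of i] mB(3)[of j]]
            prod_int[OF mA(1) mB(1) mA(3)[of j] mB(3)[of i]]
            prod_int[OF mA(1) mB(1) one[OF mA(1)] mB(5)[of i j]]
      unfolding mu_def nu_def
      by (simp add: mA(4,6) mB(4,6) M.prob_space N.prob_space)
    also have "\<dots> = (mat 2 :: real^'n^'n) $ i $ j" by (simp add: mat_def)
    finally show "cov_mat (law_sum \<mu> \<nu>) $ i $ j = (mat 2 :: real^'n^'n) $ i $ j" .
  qed
qed

lemma whiten_id: assumes "Wf = zca_cor_W \<or> Wf = cholesky_W" "identity_cov \<mu>"
  shows "whiten Wf (\<mu> :: (real^('n::{finite,linorder})) measure) = \<mu>"
proof -
  have "cov_mat \<mu> = mat 1" "sets \<mu> = sets borel" using assms(2) by (auto simp: identity_cov_def is_law_def)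
  moreover have "Wf (mat 1 :: real^('n::{finite,linorder})^('n::{finite,linorder})) = mat 1"
    using W_mat[OF assms(1), of 1] by simp
  ultimately show ?thesis
    by (simp add: whiten_def law_lin_def distr_id2)
qed

lemma whiten_sum: assumes "Wf = zca_cor_W \<or> Wf = cholesky_W" "identity_cov \<mu>" "identity_cov \<nu>"
  shows "whiten Wf (law_sum \<mu> \<nu> :: (real^('n::{finite,linorder})) measure) = law_scale (1 / sqrt 2) (law_sum \<mu> \<nu>)"
  using law_sum_cov[OF assms(2,3)] W_mat[OF assms(1), of 2]
  by (simp add: whiten_def law_lin_def law_scale_def mat_vec)

theorem mainTheorem11:
  fixes D :: "(real^('n::{finite,linorder})) measure \<Rightarrow> (real^('n::{finite,linorder})) measure \<Rightarrow> ennreal"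
    and Wf :: "real^('n::{finite,linorder})^('n::{finite,linorder}) \<Rightarrow> real^('n::{finite,linorder})^('n::{finite,linorder})"
    and \<mu>X \<mu>Y \<mu>Z \<mu>W :: "(real^('n::{finite,linorder})) measure"
  assumes "Wf = zca_cor_W \<or> Wf = cholesky_W"
    and "zolotarev_ideal D"
    and "identity_cov \<mu>X" and "identity_cov \<mu>Y" and "identity_cov \<mu>Z" and "identity_cov \<mu>W"
  shows "whitened_div D Wf (law_sum \<mu>X \<mu>Z) (law_sum \<mu>Y \<mu>W)
           \<le> whitened_div D Wf \<mu>X \<mu>Y + whitened_div D Wf \<mu>Z \<mu>W"
proof -
  have L: "is_law \<mu>X" "is_law \<mu>Y" "is_law \<mu>Z" "is_law \<mu>W"
    using assms(3-6) by (auto simp: identity_cov_def)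
  have L2: "is_law (law_sum \<mu>X \<mu>Z)" "is_law (law_sum \<mu>Y \<mu>W)"
    using law_sum_cov(1) assms(3-6) by auto
  have add: "D (law_sum \<mu>X \<mu>Z) (law_sum \<mu>Y \<mu>W) \<le> D \<mu>X \<mu>Y + D \<mu>Z \<mu>W"
    using assms(2) L unfolding zolotarev_ideal_def by blast
  have sc: "D (law_scale (1 / sqrt 2) (law_sum \<mu>X \<mu>Z)) (law_scale (1 / sqrt 2) (law_sum \<mu>Y \<mu>W))
      = ennreal \<bar>1 / sqrt 2\<bar> * D (law_sum \<mu>X \<mu>Z) (law_sum \<mu>Y \<mu>W)"
    using assms(2) L2 unfolding zolotarev_ideal_def by blast
  have le1: "ennreal \<bar>1 / sqrt 2\<bar> \<le> 1" by (simp add: ennreal_le_1)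
  have "whitened_div D Wf (law_sum \<mu>X \<mu>Z) (law_sum \<mu>Y \<mu>W) = ennreal \<bar>1 / sqrt 2\<bar> * D (law_sum \<mu>X \<mu>Z) (law_sum \<mu>Y \<mu>W)"
    using sc by (simp add: whitened_div_def whiten_sum[OF assms(1)] assms(3-6))
  also have "\<dots> \<le> 1 * D (law_sum \<mu>X \<mu>Z) (law_sum \<mu>Y \<mu>W)"
    by (rule mult_right_mono[OF le1]) simp
  also have "\<dots> \<le> D \<mu>X \<mu>Y + D \<mu>Z \<mu>W" using add by simp
  also have "\<dots> = whitened_div D Wf \<mu>X \<mu>Y + whitened_div D Wf \<mu>Z \<mu>W"
    by (simp add: whitened_div_def whiten_id[OF assms(1)] assms(3-6))
  finally show ?thesis .
qed
end
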